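(* Let $P$ be a finite nonempty set of nonempty linear strings over an ordered finite alphabet $\Sigma$. Let $c$ be any circular superstring of $P\cup\overline P$. Then $g(c)$ is a linear superstring of $P$, and $|g(c)|\le |c|/2$.
   Context: Let $\overline\Sigma=\{\overline a: a\in\Sigma\}$ be a disjoint copy of $\Sigma$. The alphabet $\Sigma\cup\overline\Sigma$ is totally ordered so that $a<\overline b$ for all $a\in\Sigma$ and $\overline b\in\overline\Sigma$. For $w=a_1\dots a_k$ over $\Sigma$, set $\overline w=\overline{a_1}\dots\overline{a_k}$, and let $\overline P=\{\overline w: w\in P\}$. A circular string $\langle a_1\dots a_n\rangle$ has length $n$, and its substrings are the finite substrings of $(a_1\dots a_n)^\infty$. A (circular or linear) superstring of a set of strings contains each of them as a substring. For a circular superstring $c$ of $P\cup\overline P$ of length $k$, let $l(c)$ be the lexicographically smallest linear string among the circular shifts of $c$ whose first letter is in $\Sigma$ and whose $k$-th (last) letter is in $\overline\Sigma$. For a linear string $w$ and a sub-alphabet $\Sigma''$, $w|_{\Sigma''}$ denotes the subsequence of $w$ formed by its letters in $\Sigma''$. Let $g'(c)$ be whichever of $l(c)|_{\Sigma}$ and $l(c)|_{\overline\Sigma}$ has minimal length. Then set $g(c)=a_1\dots a_k$ if either $g'(c)=a_1\dots a_k\in\Sigma^*$ or $g'(c)=\overline{a_1}\dots\overline{a_k}\in\overline\Sigma^*$. *)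

theory Defs
  imports Main "HOL-Library.Sublist"
begin

text \<open>Letters of \<Sigma> \<union> \<Sigma>bar are modelled as Inl a (for a) and Inr a (for abar).\<close>

definition bar_word :: "'a list \<Rightarrow> ('a + 'a) list" where
  "bar_word w = map Inr w"

definition plain_word :: "'a list \<Rightarrow> ('a + 'a) list" where
  "plain_word w = map Inl w"

definition letter_less :: "('a::linorder + 'a) \<Rightarrow> ('a + 'a) \<Rightarrow> bool" where
  "letter_less x y = (case (x, y) of
      (Inl a, Inl b) \<Rightarrow> a < b
    | (Inl _, Inr _) \<Rightarrow> True
    | (Inr _, Inl _) \<Rightarrow> False
    | (Inr a, Inr b) \<Rightarrow> a < b)"

definition lex_less :: "('a::linorder + 'a) list \<Rightarrow> ('a + 'a) list \<Rightarrow> bool" where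
  "lex_less u v = ((u, v) \<in> lexord {(x, y). letter_less x y})"

text \<open>A circular string is represented by a nonempty list c (any representative);
  w is a substring of the circular string iff it is a finite substring of c^\<infinity>.\<close>
definition circ_substring :: "'b list \<Rightarrow> 'b list \<Rightarrow> bool" where
  "circ_substring w c = (\<exists>i. w = map (\<lambda>j. c ! ((i + j) mod length c)) [0..<length w])"

definition circ_superstring :: "'b list \<Rightarrow> 'b list set \<Rightarrow> bool" where
  "circ_superstring c S = (\<forall>w\<in>S. circ_substring w c)"

definition linear_superstring :: "'b list \<Rightarrow> 'b list set \<Rightarrow> bool" where
  "linear_superstring s S = (\<forall>w\<in>S. sublist w s)"

definition circ_shifts :: "'b list \<Rightarrow> 'b list set" where
  "circ_shifts c = {rotate i c | i. i < length c}"

definition l_candidates :: "('a + 'a) list \<Rightarrow> ('a + 'a) list set" where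
  "l_candidates c = {s \<in> circ_shifts c. isl (hd s) \<and> \<not> isl (last s)}"

definition l_of :: "('a::linorder + 'a) list \<Rightarrow> ('a + 'a) list" where
  "l_of c = (SOME s. s \<in> l_candidates c \<and> (\<forall>t\<in>l_candidates c. s = t \<or> lex_less s t))"

definition g_of :: "('a::linorder + 'a) list \<Rightarrow> 'a list" where
  "g_of c = (let u = filter isl (l_of c); v = filter (\<lambda>x. \<not> isl x) (l_of c)
             in if length u \<le> length v then map projl u else map projr v)"

end

theory Submission
  imports Defs
begin

lemma letter_props:
  "trans {(x::'a::linorder+'a, y). letter_less x y}" "total {(x::'a::linorder+'a, y). letter_less x y}"
  "\<forall>x. (x,x) \<notin> {(x::'a::linorder+'a, y). letter_less x y}"
  unfolding trans_def total_on_def letter_less_def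
  by (auto split: sum.splits)
lemma lex_props:
  "lex_less u v \<Longrightarrow> lex_less v w \<Longrightarrow> lex_less u (w::('a::linorder+'a) list)"
  unfolding lex_less_def
    by (rule lexord_trans[OF _ _ letter_props(1)])
lemma lex_props2:
  "u \<noteq> v \<Longrightarrow> lex_less u v \<or> lex_less v (u::('a::linorder+'a) list)"
  unfolding lex_less_def
  using total_lexord[OF letter_props(2)] unfolding total_on_def by blast
lemma lex_props3:
  "\<not> lex_less u (u::('a::linorder+'a) list)"
  unfolding lex_less_def
  by (rule lexord_irreflexive[OF letter_props(3)])

lemma ex_min:
  assumes "finite (S::('a::linorder+'a) list set)" "S \<noteq> {}"
  shows "\<exists>s\<in>S. \<forall>t\<in>S. s = t \<or> lex_less s t"
  using assms
proof (induction S rule: finite_ne_induct)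
  case (singleton x) show ?case by blast
next
  case (insert x F)
  from insert.IH obtain m where m: "m \<in> F" "\<forall>t\<in>F. m = t \<or> lex_less m t" by (elim bexE) simp
  show ?case
  proof (cases "lex_less x m")
    case True
    have "\<forall>t\<in>insert x F. x = t \<or> lex_less x t"
    proof
      fix t assume t: "t \<in> insert x F"
      show "x = t \<or> lex_less x t"
      proof (cases "t = x")
        case False
        then have "t \<in> F" using t by simp
        then have "m = t \<or> lex_less m t" using m by simp
        then show ?thesis
        proof
          assume "m = t" then show ?thesis using True by simp
        next
          assume "lex_less m t" then show ?thesis using lex_props[OF True] by simp
        qed
      qed simp
    qed
    then show ?thesis by blast
  next
    case False
    have "m \<noteq> x" using m(1) insert.hyps by blast
    then have "lex_less m x" using lex_props2[of m x] False by simp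
    then have "\<forall>t\<in>insert x F. m = t \<or> lex_less m t" using m by simp
    then show ?thesis using m by blast
  qed
qed

lemma candidate_exists:
  assumes "c \<noteq> []" "isl (c ! j)" "j < length c" "\<not> isl (c ! k)" "k < length c"
  shows "l_candidates c \<noteq> {}"
proof -
  define n where "n = length c"
  have n: "n > 0" using assms n_def by simp
  define D where "D = {d. 1 \<le> d \<and> isl (c ! ((k + d) mod n))}"
  have "(j + n - k) \<in> D"
  proof -
    have "(k + (j + n - k)) mod n = j" using assms n_def by simp
    moreover have "j \<noteq> k" using assms by auto
    moreover have "1 \<le> j + n - k" using assms n_def by linarith
    ultimately show ?thesis unfolding D_def using assms by auto
  qed
  then have "D \<noteq> {}" by blast
  define d where "d = Least (\<lambda>d. d \<in> D)"
  have dD: "d \<in> D" using \<open>D \<noteq> {}\<close> d_def by (metis LeastI ex_in_conv)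
  have prev: "\<not> isl (c ! ((k + (d - 1)) mod n))"
  proof (cases "d = 1")
    case True then show ?thesis using assms n_def by simp
  next
    case False
    have "d - 1 < d" using dD unfolding D_def by auto
    then have "d - 1 \<notin> D"
      using not_less_Least[of "d - 1" "\<lambda>d. d \<in> D"] unfolding d_def[symmetric] by blast
    then show ?thesis using False dD unfolding D_def by auto
  qed
  define i where "i = (k + d) mod n"
  have i: "i < n" using n i_def by simp
  define s where "s = rotate i c"
  have sl: "length s = n" using s_def n_def by simp
  have "s \<in> circ_shifts c" unfolding circ_shifts_def s_def using i n_def by blast
  moreover have "isl (hd s)"
  proof -
    have "hd s = s ! 0" using sl n by (cases s) auto
    also have "\<dots> = c ! i" unfolding s_def using nth_rotate[of 0 c i] n n_def i by simp
    finally show ?thesis using dD unfolding D_def i_def by simp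
  qed
  moreover have "\<not> isl (last s)"
  proof -
    have "s \<noteq> []" using sl n by auto
    then have "last s = s ! (n - 1)" using sl by (simp add: last_conv_nth)
    also have "\<dots> = c ! ((i + (n - 1)) mod n)"
    proof -
      have "n - 1 < length c" using n n_def by simp
      then have "rotate i c ! (n - 1) = c ! ((i + (n - 1)) mod length c)" by (rule nth_rotate)
      then show ?thesis unfolding s_def n_def by simp
    qed
    also have "(i + (n - 1)) mod n = (k + (d - 1)) mod n"
    proof -
      have "(i + (n - 1)) mod n = (k + d + (n - 1)) mod n" unfolding i_def by (simp add: mod_add_left_eq)
      also have "k + d + (n - 1) = (k + (d - 1)) + n" using dD n unfolding D_def by auto
      finally show ?thesis by simp
    qed
    finally show ?thesis using prev by simp
  qed
  ultimately show ?thesis unfolding l_candidates_def by blast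
qed

lemma circ_sub_rotate:
  assumes "circ_substring w c" "i < length c"
  shows "circ_substring w (rotate i c)"
proof -
  define n where "n = length c"
  obtain p where p: "w = map (\<lambda>j. c ! ((p + j) mod n)) [0..<length w]"
    using assms unfolding circ_substring_def n_def by blast
  define q where "q = p + (n - i)"
  have "w = map (\<lambda>j. rotate i c ! ((q + j) mod n)) [0..<length w]"
  proof (subst p, rule map_cong[OF refl])
    fix j assume "j \<in> set [0..<length w]"
    have "n > 0" using assms(2) n_def by linarith
    then have "(q + j) mod n < n" by simp
    then have "rotate i c ! ((q + j) mod n) = c ! ((i + (q + j) mod n) mod n)"
      using nth_rotate[of "(q+j) mod n" c i] n_def by simp
    also have "(i + (q + j) mod n) mod n = (p + j) mod n"
    proof -
      have "(i + (q + j) mod n) mod n = (i + (q + j)) mod n" by (simp add: mod_add_right_eq)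
      also have "i + (q + j) = (p + j) + n" using assms n_def q_def by simp
      finally show ?thesis by simp
    qed
    finally show "c ! ((p + j) mod n) = rotate i c ! ((q + j) mod n)" by simp
  qed
  then show ?thesis unfolding circ_substring_def n_def by auto
qed

lemma nowrap_sublist:
  assumes "length s = n" "p mod n + L \<le> n" "n > 0"
  shows "sublist (map (\<lambda>j. s ! ((p + j) mod n)) [0..<L]) s"
proof -
  have "map (\<lambda>j. s ! ((p + j) mod n)) [0..<L] = take L (drop (p mod n) s)"
  proof (rule nth_equalityI)
    show "length (map (\<lambda>j. s ! ((p + j) mod n)) [0..<L]) = length (take L (drop (p mod n) s))"
      using assms by simp
  next
    fix j assume "j < length (map (\<lambda>j. s ! ((p + j) mod n)) [0..<L])"
    then have j: "j < L" by simp
    have "(p + j) mod n = p mod n + j"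
      using assms j by (metis add_lessD1 le_eq_less_or_eq less_le_trans mod_add_left_eq mod_less nat_add_left_cancel_less)
    then show "map (\<lambda>j. s ! ((p + j) mod n)) [0..<L] ! j = take L (drop (p mod n) s) ! j"
      using j assms by simp
  qed
  moreover have "sublist (take L (drop (p mod n) s)) s"
    by (meson sublist_drop sublist_order.dual_order.trans sublist_take)
  ultimately show ?thesis by simp
qed

lemma wrap_hit:
  fixes n p L :: nat
  assumes "n > 0" "p mod n + L > n"
  shows "\<exists>j<L. (p + j) mod n = 0" "\<exists>j<L. (p + j) mod n = n - 1"
proof -
  have pn: "p mod n < n" using assms(1) by simp
  have e1: "(p + (n - p mod n)) mod n = (p mod n + (n - p mod n)) mod n" using mod_add_left_eq by metis
  have e2: "p mod n + (n - p mod n) = n" using pn by linarith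
  have "n - p mod n < L" using assms(2) pn by linarith
  then show "\<exists>j<L. (p + j) mod n = 0" using e1 e2 by (intro exI[of _ "n - p mod n"]) simp
  have f1: "(p + (n - 1 - p mod n)) mod n = (p mod n + (n - 1 - p mod n)) mod n" using mod_add_left_eq by metis
  have f2: "p mod n + (n - 1 - p mod n) = n - 1" using pn by linarith
  have f3: "(n - 1) mod n = n - 1" using assms(1) by simp
  have "n - 1 - p mod n < L" using assms(2) pn by linarith
  then show "\<exists>j<L. (p + j) mod n = n - 1" using f1 f2 f3 by (intro exI[of _ "n - 1 - p mod n"]) simp
qed


lemma sublist_filter_map:
  assumes "sublist xs ys"
  shows "sublist (map f (filter P xs)) (map f (filter P ys))"
  using assms unfolding sublist_def by fastforce

lemma candidate_good:
  assumes s: "s \<in> l_candidates c" and c: "c \<noteq> []"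
    and sup: "circ_superstring c (plain_word ` P \<union> bar_word ` P)"
  shows "linear_superstring (map projl (filter isl s)) P \<and> linear_superstring (map projr (filter (\<lambda>x. \<not> isl x) s)) P"
proof -
  obtain i where i: "s = rotate i c" "i < length c" and hs: "isl (hd s)" and ls: "\<not> isl (last s)"
    using s unfolding l_candidates_def circ_shifts_def by blast
  define n where "n = length c"
  have sl: "length s = n" "n > 0" using i c n_def by auto
  have sne: "s \<noteq> []" using sl by auto
  have lastn: "s ! (n - 1) = last s" using sl sne by (simp add: last_conv_nth)
  have hd0: "s ! 0 = hd s" using sne by (simp add: hd_conv_nth)
  have A: "sublist w (map projl (filter isl s))" if w: "w \<in> P" for w
  proof -
    have "circ_substring (plain_word w) s" using sup w i circ_sub_rotate unfolding circ_superstring_def by blast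
    then obtain p where p: "map Inl w = map (\<lambda>j. s ! ((p + j) mod n)) [0..<length w]"
      unfolding circ_substring_def plain_word_def sl(1)[symmetric] by auto
    have el: "isl (s ! ((p + j) mod n))" if "j < length w" for j
    proof -
      have "Inl (w ! j) = s ! ((p + j) mod n)" using arg_cong[OF p, of "\<lambda>l. l ! j"] that by (simp del: upt_Suc)
      then show ?thesis by (metis sum.disc(1))
    qed
    have "p mod n + length w \<le> n"
    proof (rule ccontr)
      assume "\<not> ?thesis"
      then obtain j where "j < length w" "(p + j) mod n = n - 1" using wrap_hit(2)[of n p "length w"] sl by auto
      then have "isl (s ! (n - 1))" using el by metis
      then show False using lastn ls by simp
    qed
    then have "sublist (map Inl w) s" by (subst p) (rule nowrap_sublist[OF sl(1) _ sl(2)])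
    from sublist_filter_map[OF this, of projl isl] show ?thesis by (simp add: comp_def)
  qed
  have B: "sublist w (map projr (filter (\<lambda>x. \<not> isl x) s))" if w: "w \<in> P" for w
  proof -
    have "circ_substring (bar_word w) s" using sup w i circ_sub_rotate unfolding circ_superstring_def by blast
    then obtain p where p: "map Inr w = map (\<lambda>j. s ! ((p + j) mod n)) [0..<length w]"
      unfolding circ_substring_def bar_word_def sl(1)[symmetric] by auto
    have el: "\<not> isl (s ! ((p + j) mod n))" if "j < length w" for j
    proof -
      have "Inr (w ! j) = s ! ((p + j) mod n)" using arg_cong[OF p, of "\<lambda>l. l ! j"] that by (simp del: upt_Suc)
      then show ?thesis by (metis sum.disc(2))
    qed
    have "p mod n + length w \<le> n"
    proof (rule ccontr)
      assume "\<not> ?thesis"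
      then obtain j where "j < length w" "(p + j) mod n = 0" using wrap_hit(1)[of n p "length w"] sl by auto
      then have "\<not> isl (s ! (0))" using el by metis
      then show False using hd0 hs by simp
    qed
    then have "sublist (map Inr w) s" by (subst p) (rule nowrap_sublist[OF sl(1) _ sl(2)])
    from sublist_filter_map[OF this, of projr "\<lambda>x. \<not> isl x"] show ?thesis by (simp add: comp_def)
  qed
  show ?thesis using A B unfolding linear_superstring_def by blast
qed

theorem lemma4:
  fixes P :: "('a::{linorder, finite}) list set"
    and c :: "('a + 'a) list"
  assumes "finite P" and "P \<noteq> {}" and "\<forall>w\<in>P. w \<noteq> []"
    and "c \<noteq> []"
    and "circ_superstring c (plain_word ` P \<union> bar_word ` P)"
  shows "linear_superstring (g_of c) P \<and> 2 * length (g_of c) \<le> length c"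
proof -
  obtain w where w: "w \<in> P" "w \<noteq> []" using assms(2,3) by blast
  have "circ_substring (plain_word w) c" using assms(5) w unfolding circ_superstring_def by blast
  then obtain p where p: "map Inl w = map (\<lambda>j. c ! ((p + j) mod length c)) [0..<length w]"
    unfolding circ_substring_def plain_word_def by auto
  have "Inl (w ! 0) = c ! (p mod length c)" using arg_cong[OF p, of "\<lambda>l. l ! 0"] w by (simp del: upt_Suc add: nth_map)
  hence j: "isl (c ! (p mod length c))" by (metis sum.disc(1))
  have "circ_substring (bar_word w) c" using assms(5) w unfolding circ_superstring_def by blast
  then obtain q where q: "map Inr w = map (\<lambda>j. c ! ((q + j) mod length c)) [0..<length w]"
    unfolding circ_substring_def bar_word_def by auto
  have "Inr (w ! 0) = c ! (q mod length c)" using arg_cong[OF q, of "\<lambda>l. l ! 0"] w by (simp del: upt_Suc add: nth_map)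
  hence k: "\<not> isl (c ! (q mod length c))" by (metis sum.disc(2))
  have ne: "l_candidates c \<noteq> {}"
    using candidate_exists[OF assms(4) j _ k] assms(4) by simp
  have fin: "finite (l_candidates c)"
  proof -
    have "circ_shifts c = (\<lambda>i. rotate i c) ` {..<length c}" unfolding circ_shifts_def by auto
    then show ?thesis unfolding l_candidates_def by simp
  qed
  obtain m where "m \<in> l_candidates c" "\<forall>t\<in>l_candidates c. m = t \<or> lex_less m t"
    using ex_min[OF fin ne] by blast
  then have "\<exists>s. s \<in> l_candidates c \<and> (\<forall>t\<in>l_candidates c. s = t \<or> lex_less s t)" by blast
  then have "l_of c \<in> l_candidates c \<and> (\<forall>t\<in>l_candidates c. l_of c = t \<or> lex_less (l_of c) t)"
    unfolding l_of_def by (rule someI_ex)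
  then have lm: "l_of c \<in> l_candidates c" by blast
  note good = candidate_good[OF lm assms(4,5)]
  have len: "length (l_of c) = length c" using lm unfolding l_candidates_def circ_shifts_def by auto
  have sum: "length (filter isl (l_of c)) + length (filter (\<lambda>x. \<not> isl x) (l_of c)) = length c"
    using sum_length_filter_compl len by metis
  show ?thesis
  proof (cases "length (filter isl (l_of c)) \<le> length (filter (\<lambda>x. \<not> isl x) (l_of c))")
    case True
    then have "g_of c = map projl (filter isl (l_of c))" unfolding g_of_def Let_def by simp
    then show ?thesis using good sum True by simp
  next
    case False
    then have "g_of c = map projr (filter (\<lambda>x. \<not> isl x) (l_of c))" unfolding g_of_def Let_def by simp
    then show ?thesis using good sum False by simp
  qed
qed

end
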